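(* Let $\mathcal{C}=\{C_{\theta,t}:\theta\in\Theta,\ t\in\mathcal{T}\}$ be a class of prediction sets $C_{\theta,t}:\mathcal{X}\to 2^{\mathcal{Y}}$ with $\mathcal{T}\subset\mathbb{R}$, such that for each $\theta$ the family is nested ($t\le t'$ implies $C_{\theta,t}(x)\subseteq C_{\theta,t'}(x)$ for all $x$). Let $\ell_{\mathrm{eff}}(C;(x,y))$ be an efficiency loss that is non-decreasing in the set argument. Let $D_{\mathrm{cal}}=\{(x_i,y_i)\}_{i=1}^{n_{\mathrm{cal}}}$ be i.i.d. from a distribution of $(X,Y)$, let $\alpha\in(0,1)$, $\varepsilon_0\ge 0$, and let $(\hat\theta,\hat t)$ be a solution of $$\min_{\theta\in\Theta,t\in\mathcal{T}} \hat L_{\mathrm{eff}}(C_{\theta,t}) \quad\text{s.t.}\quad \hat L_{\mathrm{coverage}}(C_{\theta,t})\le \alpha+\varepsilon_0,$$ where $\hat L_{\mathrm{eff}}(C)=\frac1{n_{\mathrm{cal}}}\sum_i \ell_{\mathrm{eff}}(C;(x_i,y_i))$ and $\hat L_{\mathrm{coverage}}(C)=\frac1{n_{\mathrm{cal}}}\sum_i\mathbf{1}\{y_i\notin C(x_i)\}$. Let $L_{\mathrm{eff}}(C)=\mathbb{E}[\ell_{\mathrm{eff}}(C;(X,Y))]$, $L_{\mathrm{coverage}}(C)=\mathbb{P}(Y\notin C(X))$, and $$\varepsilon_{\mathrm{eff}}=\sup_{\theta\in\Theta,t\in\mathcal{T}}|\hat L_{\mathrm{eff}}(C_{\theta,t})-L_{\mathrm{eff}}(C_{\theta,t})|,\qquad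 \varepsilon_{\mathrm{coverage}}=\sup_{\theta\in\Theta,t\in\mathcal{T}}|\hat L_{\mathrm{coverage}}(C_{\theta,t})-L_{\mathrm{coverage}}(C_{\theta,t})|.$$ Then: (a) $L_{\mathrm{coverage}}(C_{\hat\theta,\hat t})\le \alpha+\varepsilon_0+\varepsilon_{\mathrm{coverage}}$; (b) if $\varepsilon_0\ge\varepsilon_{\mathrm{coverage}}$, then $$L_{\mathrm{eff}}(C_{\hat\theta,\hat t})\le \inf_{(\theta,t)\in\Theta\times\mathcal{T}:\ L_{\mathrm{coverage}}(C_{\theta,t})\le\alpha} L_{\mathrm{eff}}(C_{\theta,t})+2\varepsilon_{\mathrm{eff}}.$$
   Context: A prediction set is a map $C:\mathcal{X}\to 2^{\mathcal{Y}}$; $(X,Y)$ denotes a test example drawn from the same distribution as the calibration data. *)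

theory Defs
  imports "HOL-Probability.Probability"
begin

definition emp_eff :: "(('x \<Rightarrow> 'y set) \<Rightarrow> 'x \<times> 'y \<Rightarrow> real) \<Rightarrow> nat \<Rightarrow> (nat \<Rightarrow> 'x \<times> 'y)
    \<Rightarrow> ('x \<Rightarrow> 'y set) \<Rightarrow> real" where
  "emp_eff l n D C = (\<Sum>i<n. l C (D i)) / real n"

definition emp_cov :: "nat \<Rightarrow> (nat \<Rightarrow> 'x \<times> 'y) \<Rightarrow> ('x \<Rightarrow> 'y set) \<Rightarrow> real" where
  "emp_cov n D C = (\<Sum>i<n. if snd (D i) \<notin> C (fst (D i)) then 1 else 0) / real n"

definition pop_eff :: "('x \<times> 'y) measure \<Rightarrow> (('x \<Rightarrow> 'y set) \<Rightarrow> 'x \<times> 'y \<Rightarrow> real)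
    \<Rightarrow> ('x \<Rightarrow> 'y set) \<Rightarrow> real" where
  "pop_eff M l C = (\<integral>z. l C z \<partial>M)"

definition pop_cov :: "('x \<times> 'y) measure \<Rightarrow> ('x \<Rightarrow> 'y set) \<Rightarrow> real" where
  "pop_cov M C = measure M {z \<in> space M. snd z \<notin> C (fst z)}"

end

theory Submission
  imports Defs
begin

theorem proposition2:
  fixes P :: "'w measure" and M :: "('x \<times> 'y) measure"
    and Z :: "nat \<Rightarrow> 'w \<Rightarrow> 'x \<times> 'y" and n :: nat
    and C :: "'p \<Rightarrow> real \<Rightarrow> 'x \<Rightarrow> 'y set"
    and \<Theta> :: "'p set" and T :: "real set"
    and l :: "('x \<Rightarrow> 'y set) \<Rightarrow> 'x \<times> 'y \<Rightarrow> real"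
    and \<alpha> \<epsilon>0 :: real
    and th :: "'w \<Rightarrow> 'p" and tt :: "'w \<Rightarrow> real"
  assumes P: "prob_space P" and M: "prob_space M"
    and n: "n > 0"
    and Zmeas: "\<And>i. i < n \<Longrightarrow> Z i \<in> measurable P M"
    and Zdist: "\<And>i. i < n \<Longrightarrow> distr P M (Z i) = M"
    and Zindep: "prob_space.indep_vars P (\<lambda>_. M) Z {..<n}"
    and nested: "\<And>\<theta> t t' x. \<theta> \<in> \<Theta> \<Longrightarrow> t \<in> T \<Longrightarrow> t' \<in> T \<Longrightarrow> t \<le> t'
                   \<Longrightarrow> C \<theta> t x \<subseteq> C \<theta> t' x"
    and mono_l: "\<And>A B z. (\<And>x. A x \<subseteq> B x) \<Longrightarrow> l A z \<le> l B z"
    and l_int: "\<And>\<theta> t. \<theta> \<in> \<Theta> \<Longrightarrow> t \<in> T \<Longrightarrow> integrable M (l (C \<theta> t))"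
    and cov_ev: "\<And>\<theta> t. \<theta> \<in> \<Theta> \<Longrightarrow> t \<in> T \<Longrightarrow>
                   {z \<in> space M. snd z \<notin> C \<theta> t (fst z)} \<in> sets M"
    and alpha: "0 < \<alpha>" "\<alpha> < 1" and eps0: "0 \<le> \<epsilon>0"
    and sol: "\<And>\<omega>. \<omega> \<in> space P \<Longrightarrow>
         th \<omega> \<in> \<Theta> \<and> tt \<omega> \<in> T
       \<and> emp_cov n (\<lambda>i. Z i \<omega>) (C (th \<omega>) (tt \<omega>)) \<le> \<alpha> + \<epsilon>0
       \<and> (\<forall>\<theta>\<in>\<Theta>. \<forall>t\<in>T. emp_cov n (\<lambda>i. Z i \<omega>) (C \<theta> t) \<le> \<alpha> + \<epsilon>0 \<longrightarrow>
            emp_eff l n (\<lambda>i. Z i \<omega>) (C (th \<omega>) (tt \<omega>)) \<le> emp_eff l n (\<lambda>i. Z i \<omega>) (C \<theta> t))"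
  shows "\<forall>\<omega>\<in>space P.
     (let eps_eff = (SUP p\<in>\<Theta> \<times> T. ereal \<bar>emp_eff l n (\<lambda>i. Z i \<omega>) (C (fst p) (snd p))
                                          - pop_eff M l (C (fst p) (snd p))\<bar>);
          eps_cov = (SUP p\<in>\<Theta> \<times> T. ereal \<bar>emp_cov n (\<lambda>i. Z i \<omega>) (C (fst p) (snd p))
                                          - pop_cov M (C (fst p) (snd p))\<bar>)
      in ereal (pop_cov M (C (th \<omega>) (tt \<omega>))) \<le> ereal (\<alpha> + \<epsilon>0) + eps_cov
       \<and> (eps_cov \<le> ereal \<epsilon>0 \<longrightarrow>
            ereal (pop_eff M l (C (th \<omega>) (tt \<omega>)))
              \<le> (INF p\<in>{p\<in>\<Theta> \<times> T. pop_cov M (C (fst p) (snd p)) \<le> \<alpha>}.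
                    ereal (pop_eff M l (C (fst p) (snd p)))) + 2 * eps_eff))"
proof (intro ballI)
  fix \<omega> assume w: "\<omega> \<in> space P"
  define D where "D = (\<lambda>i. Z i \<omega>)"
  define Ee where "Ee = (SUP p\<in>\<Theta> \<times> T. ereal \<bar>emp_eff l n D (C (fst p) (snd p))
                                          - pop_eff M l (C (fst p) (snd p))\<bar>)"
  define Ec where "Ec = (SUP p\<in>\<Theta> \<times> T. ereal \<bar>emp_cov n D (C (fst p) (snd p))
                                          - pop_cov M (C (fst p) (snd p))\<bar>)"
  have s: "th \<omega> \<in> \<Theta>" "tt \<omega> \<in> T" "emp_cov n D (C (th \<omega>) (tt \<omega>)) \<le> \<alpha> + \<epsilon>0"
    "\<And>\<theta> t. \<theta>\<in>\<Theta> \<Longrightarrow> t\<in>T \<Longrightarrow> emp_cov n D (C \<theta> t) \<le> \<alpha> + \<epsilon>0 \<Longrightarrow>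
            emp_eff l n D (C (th \<omega>) (tt \<omega>)) \<le> emp_eff l n D (C \<theta> t)"
    using sol[OF w] unfolding D_def by auto
  have ec: "ereal \<bar>emp_cov n D (C \<theta> t) - pop_cov M (C \<theta> t)\<bar> \<le> Ec" if "\<theta>\<in>\<Theta>" "t\<in>T" for \<theta> t
    unfolding Ec_def by (rule SUP_upper2[of "(\<theta>,t)"]) (use that in auto)
  have ee: "ereal \<bar>emp_eff l n D (C \<theta> t) - pop_eff M l (C \<theta> t)\<bar> \<le> Ee" if "\<theta>\<in>\<Theta>" "t\<in>T" for \<theta> t
    unfolding Ee_def by (rule SUP_upper2[of "(\<theta>,t)"]) (use that in auto)
  have a: "ereal (pop_cov M (C (th \<omega>) (tt \<omega>))) \<le> ereal (\<alpha> + \<epsilon>0) + Ec"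
  proof -
    let ?e = "emp_cov n D (C (th \<omega>) (tt \<omega>))" and ?p = "pop_cov M (C (th \<omega>) (tt \<omega>))"
    have "ereal ?p \<le> ereal ?e + ereal \<bar>?e - ?p\<bar>" by simp
    also have "\<dots> \<le> ereal (\<alpha> + \<epsilon>0) + Ec"
      using s(3) ec[OF s(1,2)] by (intro add_mono) auto
    finally show ?thesis .
  qed
  have b: "ereal (pop_eff M l (C (th \<omega>) (tt \<omega>)))
              \<le> (INF p\<in>{p\<in>\<Theta> \<times> T. pop_cov M (C (fst p) (snd p)) \<le> \<alpha>}.
                    ereal (pop_eff M l (C (fst p) (snd p)))) + 2 * Ee" if cov: "Ec \<le> ereal \<epsilon>0"
  proof (cases Ee)
    case (real e)
    have "ereal (pop_eff M l (C (th \<omega>) (tt \<omega>)) - 2 * e) \<le> (INF p\<in>{p\<in>\<Theta> \<times> T. pop_cov M (C (fst p) (snd p)) \<le> \<alpha>}.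
                    ereal (pop_eff M l (C (fst p) (snd p))))"
    proof (rule INF_greatest, clarsimp)
      fix \<theta> t assume th: "\<theta> \<in> \<Theta>" "t \<in> T" and pc: "pop_cov M (C \<theta> t) \<le> \<alpha>"
      have "ereal \<bar>emp_cov n D (C \<theta> t) - pop_cov M (C \<theta> t)\<bar> \<le> ereal \<epsilon>0"
        using ec[OF th] cov by (rule order_trans)
      hence "emp_cov n D (C \<theta> t) \<le> \<alpha> + \<epsilon>0" using pc by auto
      hence le: "emp_eff l n D (C (th \<omega>) (tt \<omega>)) \<le> emp_eff l n D (C \<theta> t)" using s(4) th by auto
      have "\<bar>emp_eff l n D (C \<theta> t) - pop_eff M l (C \<theta> t)\<bar> \<le> e" using ee[OF th] real by auto
      moreover have "\<bar>emp_eff l n D (C (th \<omega>) (tt \<omega>)) - pop_eff M l (C (th \<omega>) (tt \<omega>))\<bar> \<le> e"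
        using ee[OF s(1,2)] real by auto
      ultimately show "pop_eff M l (C (th \<omega>) (tt \<omega>)) - 2 * e \<le> pop_eff M l (C \<theta> t)" using le by linarith
    qed
    then show ?thesis using real
      by (cases "(INF p\<in>{p\<in>\<Theta> \<times> T. pop_cov M (C (fst p) (snd p)) \<le> \<alpha>}.
                    ereal (pop_eff M l (C (fst p) (snd p))))") auto
  next
    case PInf then show ?thesis by simp
  next
    case MInf
    have "0 \<le> Ee" using ee[OF s(1,2)] by (rule order_trans[rotated]) simp
    with MInf show ?thesis by simp
  qed
  show "let eps_eff = (SUP p\<in>\<Theta> \<times> T. ereal \<bar>emp_eff l n (\<lambda>i. Z i \<omega>) (C (fst p) (snd p))
                                          - pop_eff M l (C (fst p) (snd p))\<bar>);
          eps_cov = (SUP p\<in>\<Theta> \<times> T. ereal \<bar>emp_cov n (\<lambda>i. Z i \<omega>) (C (fst p) (snd p))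
                                          - pop_cov M (C (fst p) (snd p))\<bar>)
      in ereal (pop_cov M (C (th \<omega>) (tt \<omega>))) \<le> ereal (\<alpha> + \<epsilon>0) + eps_cov
       \<and> (eps_cov \<le> ereal \<epsilon>0 \<longrightarrow>
            ereal (pop_eff M l (C (th \<omega>) (tt \<omega>)))
              \<le> (INF p\<in>{p\<in>\<Theta> \<times> T. pop_cov M (C (fst p) (snd p)) \<le> \<alpha>}.
                    ereal (pop_eff M l (C (fst p) (snd p)))) + 2 * eps_eff)"
    using a b unfolding Let_def Ee_def Ec_def D_def by blast
qed

end
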